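(* There exist a finite-dimensional inner product vector space $(E,g)$ over $k$ ($k=\mathbb R$ or $\mathbb C$), an endomorphism $f\in\operatorname{End}_k(E)$ and $f$-invariant subspaces $H_1,\dots,H_n$ with $E=H_1\oplus\dots\oplus H_n$ such that $\widetilde{\mathcal H}_f^\perp\ne[\operatorname{Ker} f]^\perp$ and $\mathcal H_f^\perp\ne[\operatorname{Im} f]^\perp$.
   Context: Write $f_i=f|_{H_i}$. For a subspace $W\subseteq H_i$, $[W]_i^\perp=\{v\in H_i:g(w,v)=0\ \forall w\in W\}$; for a subspace $U\subseteq E$, $U^\perp$ is its orthogonal complement in $E$. Set $\mathcal H_f^\perp=[\operatorname{Im} f_1]_1^\perp\oplus\dots\oplus[\operatorname{Im} f_n]_n^\perp$ and $\widetilde{\mathcal H}_f^\perp=[\operatorname{Ker} f_1]_1^\perp\oplus\dots\oplus[\operatorname{Ker} f_n]_n^\perp$. *)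

theory Defs
  imports Complex_Main
begin

text \<open>Concrete model of vector spaces over a field k (k = real or complex):
  vectors are functions nat => k with pointwise operations; a finite-dimensional
  vector space E is a subspace of this ambient space with a finite spanning set.\<close>

type_synonym 'k vec = "nat \<Rightarrow> 'k"

definition vzero :: "'k::field vec" where
  "vzero = (\<lambda>j. 0)"

definition vadd :: "'k::field vec \<Rightarrow> 'k vec \<Rightarrow> 'k vec" where
  "vadd u v = (\<lambda>j. u j + v j)"

definition smul :: "'k::field \<Rightarrow> 'k vec \<Rightarrow> 'k vec" where
  "smul c v = (\<lambda>j. c * v j)"

definition is_subspace :: "'k::field vec set \<Rightarrow> bool" where
  "is_subspace W \<longleftrightarrow> vzero \<in> W \<and> (\<forall>u\<in>W. \<forall>v\<in>W. vadd u v \<in> W)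
     \<and> (\<forall>c. \<forall>v\<in>W. smul c v \<in> W)"

definition vspan :: "'k::field vec set \<Rightarrow> 'k vec set" where
  "vspan B = {v. \<exists>S c. finite S \<and> S \<subseteq> B \<and> v = (\<lambda>j. \<Sum>b\<in>S. c b * b j)}"

definition finite_dim :: "'k::field vec set \<Rightarrow> bool" where
  "finite_dim E \<longleftrightarrow> (\<exists>B. finite B \<and> B \<subseteq> E \<and> vspan B = E)"

text \<open>Inner product g on E with values in k; emb : k -> complex is the embedding
  of the scalar field (of_real for k = real, id for k = complex).  g is linear in
  the first argument, (conjugate) symmetric and positive definite.\<close>

definition is_inner_product ::
  "('k::field \<Rightarrow> complex) \<Rightarrow> 'k vec set \<Rightarrow> ('k vec \<Rightarrow> 'k vec \<Rightarrow> 'k) \<Rightarrow> bool" where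
  "is_inner_product emb E g \<longleftrightarrow>
     (\<forall>u\<in>E. \<forall>v\<in>E. \<forall>w\<in>E. \<forall>a b.
        g (vadd (smul a u) (smul b v)) w = a * g u w + b * g v w)
   \<and> (\<forall>u\<in>E. \<forall>v\<in>E. emb (g u v) = cnj (emb (g v u)))
   \<and> (\<forall>v\<in>E. v \<noteq> vzero \<longrightarrow> Im (emb (g v v)) = 0 \<and> Re (emb (g v v)) > 0)"

text \<open>k-linear endomorphism of E (only its values on E matter).\<close>

definition is_endo :: "'k::field vec set \<Rightarrow> ('k vec \<Rightarrow> 'k vec) \<Rightarrow> bool" where
  "is_endo E f \<longleftrightarrow> (\<forall>v\<in>E. f v \<in> E) \<and>
     (\<forall>u\<in>E. \<forall>v\<in>E. \<forall>a b. f (vadd (smul a u) (smul b v)) = vadd (smul a (f u)) (smul b (f v)))"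

definition kerf :: "'k::field vec set \<Rightarrow> ('k vec \<Rightarrow> 'k vec) \<Rightarrow> 'k vec set" where
  "kerf V f = {v \<in> V. f v = vzero}"

definition orth_in :: "('k::field vec \<Rightarrow> 'k vec \<Rightarrow> 'k) \<Rightarrow> 'k vec set \<Rightarrow> 'k vec set \<Rightarrow> 'k vec set" where
  "orth_in g V W = {v \<in> V. \<forall>w\<in>W. g w v = 0}"

definition subspace_sum :: "nat \<Rightarrow> (nat \<Rightarrow> 'k::field vec set) \<Rightarrow> 'k vec set" where
  "subspace_sum n H = {v. \<exists>h. (\<forall>i\<in>{1..n}. h i \<in> H i) \<and> v = (\<lambda>j. \<Sum>i=1..n. h i j)}"

definition is_direct_sum :: "'k::field vec set \<Rightarrow> nat \<Rightarrow> (nat \<Rightarrow> 'k vec set) \<Rightarrow> bool" where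
  "is_direct_sum E n H \<longleftrightarrow> (\<forall>i\<in>{1..n}. is_subspace (H i) \<and> H i \<subseteq> E)
     \<and> subspace_sum n H = E
     \<and> (\<forall>h. (\<forall>i\<in>{1..n}. h i \<in> H i) \<and> (\<lambda>j. \<Sum>i=1..n. h i j) = vzero
            \<longrightarrow> (\<forall>i\<in>{1..n}. h i = vzero))"

end

theory Submission
  imports Defs
begin

lemma sum12: "(\<Sum>i=1..2. h i (j::nat)) = h (1::nat) j + h 2 j"
  by (simp add: numeral_2_eq_2)

definition "EE = {v::'k::field vec. \<forall>j\<ge>2. v j = 0}"
definition "HH i = (if i = (1::nat) then {v::'k::field vec. v 1 = 0 \<and> (\<forall>j\<ge>2. v j = 0)}
                    else {v. v 0 = v 1 \<and> (\<forall>j\<ge>2. v j = 0)})"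
definition "ff v = (\<lambda>j::nat. if j = 0 then v 0 - v 1 else (0::'k::field))"
definition "e0 = (\<lambda>j::nat. if j = 0 then 1 else (0::'k::field))"
definition "e1 = (\<lambda>j::nat. if j = 1 then 1 else (0::'k::field))"

lemma EE_sub: "is_subspace (EE::'k::field vec set)"
  by (auto simp: is_subspace_def EE_def vzero_def vadd_def smul_def)

lemma EE_fd: "finite_dim (EE::'k::field vec set)"
  unfolding finite_dim_def
proof (intro exI[of _ "{e0,e1}"] conjI)
 show "finite {e0,(e1::'k vec)}" by simp
  show "{e0, e1} \<subseteq> (EE::'k vec set)" by (auto simp: EE_def e0_def e1_def)
  have ne: "e0 \<noteq> (e1::'k vec)" by (auto simp: e0_def e1_def fun_eq_iff)
  show "vspan {e0, e1} = (EE::'k vec set)"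
  proof
    show "vspan {e0, e1} \<subseteq> (EE::'k vec set)"
    proof
      fix v assume "v \<in> vspan {e0, (e1::'k vec)}"
      then obtain S c where "finite S" "S \<subseteq> {e0,e1}" "v = (\<lambda>j. \<Sum>b\<in>S. c b * b j)"
        unfolding vspan_def by blast
      moreover have "\<forall>b\<in>S. \<forall>j\<ge>2. b j = 0" using \<open>S \<subseteq> _\<close> by (auto simp: e0_def e1_def)
      ultimately show "v \<in> EE" by (auto simp: EE_def intro!: sum.neutral)
    qed
    show "EE \<subseteq> vspan {e0, (e1::'k vec)}"
    proof
      fix v :: "'k vec" assume v: "v \<in> EE"
      show "v \<in> vspan {e0, e1}" unfolding vspan_def
      proof (intro CollectI exI conjI)
        show "finite {e0,e1}" by simp
        show "{e0,e1} \<subseteq> {e0,e1}" by simp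
        show "v = (\<lambda>j. \<Sum>b\<in>{e0,e1}. (\<lambda>b. if b = e0 then v 0 else v 1) b * b j)"
          using v ne by (auto simp: EE_def e0_def e1_def fun_eq_iff)
      qed
    qed
  qed
qed

lemma ff_endo: "is_endo EE (ff::'k::field vec \<Rightarrow> _)"
  by (auto simp: is_endo_def EE_def ff_def vadd_def smul_def fun_eq_iff algebra_simps)

lemma dsum: "is_direct_sum (EE::'k::field vec set) 2 HH"
  unfolding is_direct_sum_def
proof (intro conjI ballI allI impI)
  fix i :: nat assume "i \<in> {1..2}"
  show "is_subspace (HH i :: 'k vec set)"
    by (auto simp: is_subspace_def HH_def vzero_def vadd_def smul_def)
  show "HH i \<subseteq> (EE :: 'k vec set)" by (auto simp: HH_def EE_def)
next
  show "subspace_sum 2 HH = (EE::'k vec set)"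
  proof
    show "subspace_sum 2 HH \<subseteq> (EE::'k vec set)"
    proof
      fix v :: "'k vec" assume "v \<in> subspace_sum 2 HH"
      then obtain h where h: "\<forall>i\<in>{1..2}. h i \<in> HH i" and v: "v = (\<lambda>j. \<Sum>i=1..2. h i j)"
        unfolding subspace_sum_def by blast
      have "h 1 \<in> HH 1" "h 2 \<in> HH 2" using h by auto
      then show "v \<in> EE" unfolding v sum12 by (auto simp: EE_def HH_def)
    qed
    show "(EE::'k vec set) \<subseteq> subspace_sum 2 HH"
    proof
      fix v :: "'k vec" assume v: "v \<in> EE"
      let ?h = "\<lambda>i::nat. if i = 1 then (\<lambda>j::nat. if j = 0 then v 0 - v 1 else 0)
                  else (\<lambda>j. if j \<le> 1 then v 1 else 0)"
      show "v \<in> subspace_sum 2 HH" unfolding subspace_sum_def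
      proof (rule CollectI, rule exI[of _ ?h], intro conjI)
        show "\<forall>i\<in>{1..2}. ?h i \<in> HH i" using v by (auto simp: EE_def HH_def)
        have that: "v j = ?h 1 j + ?h 2 j" for j using v by (cases "j = 0"; cases "j = 1") (auto simp: EE_def)
        show "v = (\<lambda>j. \<Sum>i=1..2. ?h i j)" proof (rule ext)
          fix j show "v j = (\<Sum>i::nat=1..2. ?h i j)" using that[of j] sum12[of ?h j] by simp
        qed
      qed
    qed
  qed
next
  fix h :: "nat \<Rightarrow> 'k vec" and i
  assume a: "(\<forall>i\<in>{1..2}. h i \<in> HH i) \<and> (\<lambda>j. \<Sum>i = 1..2. h i j) = vzero" and i: "(i::nat) \<in> {1..2}"
  have h1: "h 1 \<in> HH 1" and h2: "h 2 \<in> HH 2" using a by auto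
  have s: "\<And>j. h 1 j + h 2 j = 0" using a by (metis sum12 vzero_def)
  have "h 2 1 = 0" using s[of 1] h1 by (simp add: HH_def)
  hence "h 2 0 = 0" using h2 by (simp add: HH_def)
  hence "h 1 0 = 0" using s[of 0] by simp
  have "h 1 = vzero" using h1 \<open>h 1 0 = 0\<close> by (auto simp: HH_def vzero_def fun_eq_iff) (metis One_nat_def less_2_cases not_le)
  moreover have "h 2 = vzero" using h2 \<open>h 2 0 = 0\<close> by (auto simp: HH_def vzero_def fun_eq_iff) (metis One_nat_def less_2_cases not_le)
  ultimately show "h i = vzero" using i by (auto simp: numeral_2_eq_2 le_Suc_eq)
qed

lemma inv: "\<forall>i\<in>{1..2}. ff ` HH i \<subseteq> (HH i :: 'k::field vec set)"
  by (auto simp: HH_def ff_def)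

definition "dd = (\<lambda>j::nat. if j \<le> 1 then 1 else (0::'k::field))"

lemma ker1: "kerf (HH 1) ff = {vzero::'k::field vec}"
  by (auto simp: kerf_def HH_def ff_def vzero_def fun_eq_iff) (metis One_nat_def less_2_cases not_le)

lemma im2: "ff ` (HH 2) = {vzero::'k::field vec}"
proof -
  have "(\<lambda>j. 0::'k) \<in> HH 2" by (simp add: HH_def)
  then show ?thesis by (force simp: HH_def ff_def vzero_def fun_eq_iff)
qed

lemma neqs:
  fixes g :: "'k::field vec \<Rightarrow> 'k vec \<Rightarrow> 'k"
  assumes l: "\<And>v. g vzero v = 0" and r: "\<And>w. g w vzero = 0"
    and a: "g dd e0 \<noteq> 0" and b: "g e0 dd \<noteq> 0"
  shows "subspace_sum 2 (\<lambda>i. orth_in g (HH i) (kerf (HH i) ff)) \<noteq> orth_in g EE (kerf EE ff)"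
    and "subspace_sum 2 (\<lambda>i. orth_in g (HH i) (ff ` HH i)) \<noteq> orth_in g EE (ff ` EE)"
proof -
  let ?h = "\<lambda>i::nat. if i = 1 then e0 else (vzero::'k vec)"
  have "e0 \<in> subspace_sum 2 (\<lambda>i. orth_in g (HH i) (kerf (HH i) ff))"
    unfolding subspace_sum_def
  proof (rule CollectI, rule exI[of _ ?h], intro conjI)
    show "\<forall>i\<in>{1..2}. ?h i \<in> orth_in g (HH i) (kerf (HH i) ff)"
    proof
      fix i :: nat assume "i \<in> {1..2}"
      then have "i = 1 \<or> i = 2" by auto
      moreover have "e0 \<in> orth_in g (HH 1) (kerf (HH 1) ff)"
        unfolding orth_in_def ker1 by (simp add: l HH_def e0_def)
      moreover have "vzero \<in> orth_in g (HH 2) (kerf (HH 2) ff)"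
        by (simp add: orth_in_def r) (simp add: HH_def vzero_def)
      ultimately show "?h i \<in> orth_in g (HH i) (kerf (HH i) ff)" by auto
    qed
    show "e0 = (\<lambda>j. \<Sum>i::nat=1..2. ?h i j)"
    proof (rule ext)
      fix j show "e0 j = (\<Sum>i::nat=1..2. ?h i j)" using sum12[of ?h j] by (simp add: vzero_def)
    qed
  qed
  moreover have "e0 \<notin> orth_in g EE (kerf EE ff)"
  proof -
    have "dd \<in> kerf EE ff" by (auto simp: kerf_def EE_def dd_def ff_def vzero_def fun_eq_iff)
    then show ?thesis using a by (auto simp: orth_in_def)
  qed
  ultimately show "subspace_sum 2 (\<lambda>i. orth_in g (HH i) (kerf (HH i) ff)) \<noteq> orth_in g EE (kerf EE ff)"
    by blast
next
  let ?h = "\<lambda>i::nat. if i = 1 then vzero else (dd::'k vec)"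
  have "dd \<in> subspace_sum 2 (\<lambda>i. orth_in g (HH i) (ff ` HH i))"
    unfolding subspace_sum_def
  proof (rule CollectI, rule exI[of _ ?h], intro conjI)
    show "\<forall>i\<in>{1..2}. ?h i \<in> orth_in g (HH i) (ff ` HH i)"
    proof
      fix i :: nat assume "i \<in> {1..2}"
      then have "i = 1 \<or> i = 2" by auto
      moreover have "dd \<in> orth_in g (HH 2) (ff ` HH 2)"
        unfolding orth_in_def im2 by (simp add: l HH_def dd_def)
      moreover have "vzero \<in> orth_in g (HH 1) (ff ` HH 1)"
        by (simp add: orth_in_def r) (simp add: HH_def vzero_def)
      ultimately show "?h i \<in> orth_in g (HH i) (ff ` HH i)" by auto
    qed
    show "dd = (\<lambda>j. \<Sum>i::nat=1..2. ?h i j)"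
    proof (rule ext)
      fix j show "dd j = (\<Sum>i::nat=1..2. ?h i j)" using sum12[of ?h j] by (simp add: vzero_def)
    qed
  qed
  moreover have "dd \<notin> orth_in g EE (ff ` EE)"
  proof -
    have "(e0::'k vec) \<in> EE" by (simp add: EE_def e0_def)
    moreover have "ff e0 = (e0::'k vec)" by (auto simp: ff_def e0_def fun_eq_iff)
    ultimately have "(e0::'k vec) \<in> ff ` EE" by (metis image_eqI)
    then show ?thesis using b unfolding orth_in_def by blast
  qed
  ultimately show "subspace_sum 2 (\<lambda>i. orth_in g (HH i) (ff ` HH i)) \<noteq> orth_in g EE (ff ` EE)"
    by blast
qed

definition "gr u v = u 0 * v 0 + u 1 * (v 1 :: real)"
definition "gc u v = u 0 * cnj (v 0) + u 1 * cnj (v 1 :: complex)"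

lemma gr_ip: "is_inner_product complex_of_real EE gr"
  unfolding is_inner_product_def
proof (intro conjI ballI allI impI)
  fix v :: "real vec" assume v: "v \<in> EE" "v \<noteq> vzero"
  have "v 0 \<noteq> 0 \<or> v 1 \<noteq> 0"
  proof (rule ccontr)
    assume "\<not> ?thesis"
    then have "v = vzero" using v(1) by (auto simp: EE_def vzero_def fun_eq_iff)
      (metis One_nat_def less_2_cases not_le)
    then show False using v(2) by simp
  qed
  then have "gr v v > 0" unfolding gr_def using sum_squares_gt_zero_iff by blast
  then show "Im (complex_of_real (gr v v)) = 0" "Re (complex_of_real (gr v v)) > 0" by auto
qed (auto simp: gr_def vadd_def smul_def algebra_simps)

lemma gc_ip: "is_inner_product id EE gc"
  unfolding is_inner_product_def
proof (intro conjI ballI allI impI)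
  fix v :: "complex vec" assume v: "v \<in> EE" "v \<noteq> vzero"
  have "v 0 \<noteq> 0 \<or> v 1 \<noteq> 0"
  proof (rule ccontr)
    assume "\<not> ?thesis"
    then have "v = vzero" using v(1) by (auto simp: EE_def vzero_def fun_eq_iff)
      (metis One_nat_def less_2_cases not_le)
    then show False using v(2) by simp
  qed
  then have "(Re (v 0))\<^sup>2 + (Im (v 0))\<^sup>2 + ((Re (v 1))\<^sup>2 + (Im (v 1))\<^sup>2) > 0"
    by (metis add_nonneg_pos add_pos_nonneg complex_neq_0 sum_power2_ge_zero)
  then show "Im (id (gc v v)) = 0" "Re (id (gc v v)) > 0"
    by (auto simp: gc_def complex_mult_cnj)
qed (auto simp: gc_def vadd_def smul_def algebra_simps)

theorem lemma3p4:
  shows "(\<exists>(E :: real vec set) g f n H.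
            is_subspace E \<and> finite_dim E \<and> is_inner_product complex_of_real E g \<and> is_endo E f
          \<and> is_direct_sum E n H \<and> (\<forall>i\<in>{1..n}. f ` H i \<subseteq> H i)
          \<and> subspace_sum n (\<lambda>i. orth_in g (H i) (kerf (H i) f)) \<noteq> orth_in g E (kerf E f)
          \<and> subspace_sum n (\<lambda>i. orth_in g (H i) (f ` H i)) \<noteq> orth_in g E (f ` E))
       \<and> (\<exists>(E :: complex vec set) g f n H.
            is_subspace E \<and> finite_dim E \<and> is_inner_product id E g \<and> is_endo E f
          \<and> is_direct_sum E n H \<and> (\<forall>i\<in>{1..n}. f ` H i \<subseteq> H i)
          \<and> subspace_sum n (\<lambda>i. orth_in g (H i) (kerf (H i) f)) \<noteq> orth_in g E (kerf E f)
          \<and> subspace_sum n (\<lambda>i. orth_in g (H i) (f ` H i)) \<noteq> orth_in g E (f ` E))"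
proof (rule conjI)
  show "\<exists>(E :: real vec set) g f n H.
            is_subspace E \<and> finite_dim E \<and> is_inner_product complex_of_real E g \<and> is_endo E f
          \<and> is_direct_sum E n H \<and> (\<forall>i\<in>{1..n}. f ` H i \<subseteq> H i)
          \<and> subspace_sum n (\<lambda>i. orth_in g (H i) (kerf (H i) f)) \<noteq> orth_in g E (kerf E f)
          \<and> subspace_sum n (\<lambda>i. orth_in g (H i) (f ` H i)) \<noteq> orth_in g E (f ` E)"
    apply (rule exI[of _ EE], rule exI[of _ gr], rule exI[of _ ff], rule exI[of _ 2], rule exI[of _ HH])
    using EE_sub EE_fd gr_ip ff_endo dsum inv neqs[of gr]
    by (simp add: gr_def vzero_def dd_def e0_def)
  show "\<exists>(E :: complex vec set) g f n H.
            is_subspace E \<and> finite_dim E \<and> is_inner_product id E g \<and> is_endo E f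
          \<and> is_direct_sum E n H \<and> (\<forall>i\<in>{1..n}. f ` H i \<subseteq> H i)
          \<and> subspace_sum n (\<lambda>i. orth_in g (H i) (kerf (H i) f)) \<noteq> orth_in g E (kerf E f)
          \<and> subspace_sum n (\<lambda>i. orth_in g (H i) (f ` H i)) \<noteq> orth_in g E (f ` E)"
    apply (rule exI[of _ EE], rule exI[of _ gc], rule exI[of _ ff], rule exI[of _ 2], rule exI[of _ HH])
    using EE_sub EE_fd gc_ip ff_endo dsum inv neqs[of gc]
    by (simp add: gc_def vzero_def dd_def e0_def)
qed

end
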